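(* Let $\tilde{\mathbf M}_D,\tilde{\mathbf S}_D\in\mathbb R^{\tilde n\times\tilde n}$ be block-diagonal positive definite matrices, let $\tilde{\mathbf M}_F,\tilde{\mathbf S}_F\in\mathbb R^{\tilde n\times\tilde n}$ be arbitrary (coupling) matrices, and set $\tilde{\mathbf M}=\tilde{\mathbf M}_D+\tilde{\mathbf M}_F$, $\tilde{\mathbf S}=\tilde{\mathbf S}_D+\tilde{\mathbf S}_F$. Consider the linear ODE $$\tilde{\mathbf M}_D\dot{\tilde{\mathbf x}}+\tilde{\mathbf S}_D\tilde{\mathbf x}+\tilde{\mathbf M}_F\dot{\tilde{\mathbf x}}+\tilde{\mathbf S}_F\tilde{\mathbf x}=\tilde{\mathbf u}(t)$$ and its "hybrid Euler" time discretization with step $\delta>0$ on an interval starting at time $t_q$: $$\tilde{\mathbf M}_D\frac{\tilde{\mathbf x}_{q,\ell+1}-\tilde{\mathbf x}_{q,\ell}}{\delta}+\tilde{\mathbf S}_D\tilde{\mathbf x}_{q,\ell+1}+\tilde{\mathbf M}_F\frac{\tilde{\mathbf x}_{q,\ell}-\tilde{\mathbf x}_{q,\ell-1}}{\delta}+\tilde{\mathbf S}_F\tilde{\mathbf x}_{q,\ell}=\tilde{\mathbf u}(t_q+(\ell+1)\delta),\quad \ell=0,1,\dots,$$ initialized by $\tilde{\mathbf x}_{q,0}=\tilde{\mathbf x}_{q,-1}=\tilde{\mathbf x}(t_q)$. Then this scheme is consistent with local truncation error of order $1$, i.e., for every smooth function $\boldsymbol\xi$ and every $t$, with $\mathcal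 D(\boldsymbol\xi,t)=\tilde{\mathbf M}\dot{\boldsymbol\xi}(t)+\tilde{\mathbf S}\boldsymbol\xi(t)$ and $$\mathcal D_\delta(\boldsymbol\xi,t)=\tilde{\mathbf M}_D\frac{\boldsymbol\xi(t+\delta)-\boldsymbol\xi(t)}{\delta}+\tilde{\mathbf S}_D\boldsymbol\xi(t+\delta)+\tilde{\mathbf M}_F\frac{\boldsymbol\xi(t)-\boldsymbol\xi(t-\delta)}{\delta}+\tilde{\mathbf S}_F\boldsymbol\xi(t),$$ one has $\mathcal D_\delta(\boldsymbol\xi,t)-\mathcal D(\boldsymbol\xi,t)=O(\delta)$ as $\delta\to0$. Further, the scheme is zero-stable provided that $\rho(\tilde{\mathbf M}_D^{-1}\tilde{\mathbf M}_F)<1$, where $\rho(\cdot)$ denotes the spectral radius.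
   Context: Origin of the matrices: a scalar field obeying a linear PDE $\partial x/\partial t+\mathcal A(x)=f$ on a bounded domain $\Omega$ is discretized by finite elements with basis functions $\phi_1,\dots,\phi_n$, giving $\mathbf M\dot{\mathbf x}+\mathbf S\mathbf x=\mathbf u$ with positive definite mass matrix $\mathbf M=\int_\Omega\boldsymbol\phi\boldsymbol\phi^T$ and stiffness matrix $\mathbf S$. The domain is decomposed into overlapping subdomains $\Omega_1,\dots,\Omega_N$; $\mathbf x^m$ collects the FE coefficients of vertices internal to $\Omega_m$ (or on $\partial\Omega\cap\partial\Omega_m$), and the augmented state is $\tilde{\mathbf x}=\mathrm{col}\{\mathbf x^1,\dots,\mathbf x^N\}$ (with repeated components due to overlap). The rows of the FE system for $\mathbf x^m$ read $\mathbf M^{mm}\dot{\mathbf x}^m+\sum_{j\ne m}\mathbf M^{mj}\dot{\mathbf x}^j+\mathbf S^{mm}\mathbf x^m+\sum_{j\ne m}\mathbf S^{mj}\mathbf x^j=\mathbf u^m$, where $\mathbf M^{mm},\mathbf S^{mm}$ are positive definite; then $\tilde{\mathbf M}_D=\mathrm{blockdiag}(\mathbf M^{11},\dots,\mathbf M^{NN})$, $\tilde{\mathbf S}_D=\mathrm{blockdiag}(\mathbf S^{11},\dots,\mathbf S^{NN})$, and $\tilde{\mathbf M}_F,\tilde{\mathbf S}_F$ collect the coupling blocks $\mathbf M^{mj},\mathbf S^{mj}$. Zero-stability is meant in the standard sense of the numerical analysis of multistep time-discretization schemes (stability of the limiting recursion $\tilde{\mathbf M}_D(\tilde{\mathbf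 x}_{\ell+1}-\tilde{\mathbf x}_\ell)+\tilde{\mathbf M}_F(\tilde{\mathbf x}_\ell-\tilde{\mathbf x}_{\ell-1})=0$ obtained as $\delta\to0$). *)

theory Defs
  imports "HOL-Analysis.Analysis" "HOL-Library.Landau_Symbols"
begin

definition pos_def_mat :: "real^'n^'n \<Rightarrow> bool" where
  "pos_def_mat A \<longleftrightarrow> (\<forall>x::real^'n. x \<noteq> 0 \<longrightarrow> x \<bullet> (A *v x) > 0)"

definition block_diag :: "('n \<Rightarrow> nat) \<Rightarrow> real^'n^'n \<Rightarrow> bool" where
  "block_diag blk A \<longleftrightarrow> (\<forall>i j. blk i \<noteq> blk j \<longrightarrow> A $ i $ j = 0)"

definition cmat :: "real^'n^'n \<Rightarrow> complex^'n^'n" where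
  "cmat A = (\<chi> i j. complex_of_real (A $ i $ j))"

definition eigenvalues :: "real^'n^'n \<Rightarrow> complex set" where
  "eigenvalues A = {c. \<exists>v::complex^'n. v \<noteq> 0 \<and> cmat A *v v = c *s v}"

definition spectral_radius :: "real^'n^'n \<Rightarrow> real" where
  "spectral_radius A = Sup (cmod ` eigenvalues A)"

definition smooth_fun :: "(real \<Rightarrow> 'a::real_normed_vector) \<Rightarrow> bool" where
  "smooth_fun f \<longleftrightarrow> (\<exists>D :: nat \<Rightarrow> real \<Rightarrow> 'a. D 0 = f \<and>
      (\<forall>k t. (D k has_vector_derivative D (Suc k) t) (at t)))"

definition cont_op :: "real^'n^'n \<Rightarrow> real^'n^'n \<Rightarrow> (real \<Rightarrow> real^'n) \<Rightarrow> real \<Rightarrow> real^'n" where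
  "cont_op M S \<xi> t = M *v vector_derivative \<xi> (at t) + S *v \<xi> t"

definition hybrid_op :: "real^'n^'n \<Rightarrow> real^'n^'n \<Rightarrow> real^'n^'n \<Rightarrow> real^'n^'n \<Rightarrow>
    (real \<Rightarrow> real^'n) \<Rightarrow> real \<Rightarrow> real \<Rightarrow> real^'n" where
  "hybrid_op MD SD MF SF \<xi> \<delta> t =
      MD *v ((1/\<delta>) *\<^sub>R (\<xi> (t + \<delta>) - \<xi> t)) + SD *v \<xi> (t + \<delta>)
    + MF *v ((1/\<delta>) *\<^sub>R (\<xi> t - \<xi> (t - \<delta>))) + SF *v \<xi> t"

text \<open>Zero-stability: all solutions of the limiting recursion
  MD (x_{l+1} - x_l) + MF (x_l - x_{l-1}) = 0 are uniformly bounded by their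
  initial data.  Here y k stands for x_{k-1}, so y 0 = x_{-1}, y 1 = x_0.\<close>
definition zero_stable :: "real^'n^'n \<Rightarrow> real^'n^'n \<Rightarrow> bool" where
  "zero_stable MD MF \<longleftrightarrow> (\<exists>C. \<forall>y :: nat \<Rightarrow> real^'n.
     (\<forall>l. MD *v (y (l+2) - y (l+1)) + MF *v (y (l+1) - y l) = 0) \<longrightarrow>
     (\<forall>l. norm (y l) \<le> C * (norm (y 0) + norm (y 1))))"

end

theory Submission
  imports Defs "Jordan_Normal_Form.Spectral_Radius"
begin

lemma taylor_bound:
  fixes D :: "nat \<Rightarrow> real \<Rightarrow> 'a::real_normed_vector"
  assumes der: "\<forall>k t. (D k has_vector_derivative D (Suc k) t) (at t)"
  shows "\<exists>K. \<forall>h. \<bar>h\<bar> \<le> 1 \<longrightarrow> norm (D 0 (t+h) - D 0 t - h *\<^sub>R D 1 t) \<le> K * h^2"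
proof -
  have cont2: "continuous_on (cball t 1) (D 2)"
    using der by (intro continuous_at_imp_continuous_on ballI has_vector_derivative_continuous) blast
  have "bounded (D 2 ` cball t 1)"
    by (intro compact_imp_bounded compact_continuous_image cont2) simp
  then obtain B where B0': "\<forall>s\<in>cball t 1. norm (D 2 s) \<le> B"
    by (auto simp: bounded_iff)
  hence B: "\<And>s. s \<in> cball t 1 \<Longrightarrow> norm (D 2 s) \<le> B" by blast
  have B0: "0 \<le> B" using B[of t] by (smt (verit) centre_in_cball norm_ge_zero)
  have lip: "norm (D 1 s - D 1 t) \<le> B * \<bar>s - t\<bar>" if s: "s \<in> cball t 1" for s
  proof -
    have "norm (D 1 s - D 1 t) \<le> B * norm (s - t)"
    proof (rule differentiable_bound[where f' = "\<lambda>x h. h *\<^sub>R D 2 x"])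
      show "convex (cball t (1::real))" by simp
      show "(D 1 has_derivative (\<lambda>h. h *\<^sub>R D 2 x)) (at x within cball t 1)" for x
        using der by (metis has_derivative_at_withinI has_vector_derivative_def numeral_2_eq_2 One_nat_def)
      show "onorm (\<lambda>h. h *\<^sub>R D 2 x) \<le> B" if "x \<in> cball t 1" for x
      proof (rule onorm_bound)
        fix h :: real
        have "norm (h *\<^sub>R D 2 x) = \<bar>h\<bar> * norm (D 2 x)" by simp
        also have "\<dots> \<le> \<bar>h\<bar> * B" by (rule mult_left_mono[OF B[OF that]]) simp
        finally show "norm (h *\<^sub>R D 2 x) \<le> B * norm h" by (simp add: mult.commute)
      qed (rule B0)
    qed (use s in auto)
    thus ?thesis by simp
  qed
  have "norm (D 0 (t+h) - D 0 t - h *\<^sub>R D 1 t) \<le> B * h^2" if h: "\<bar>h\<bar> \<le> 1" for h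
  proof -
    let ?S = "closed_segment t (t+h)"
    have segsub: "?S \<subseteq> cball t 1"
      using h by (metis add_diff_cancel_left' centre_in_cball closed_segment_subset convex_cball dist_norm
          mem_cball norm_minus_commute real_norm_def zero_le_one)
    have "norm ((D 0 (t+h)) - D 0 t - (\<lambda>u. u *\<^sub>R D 1 t) ((t+h) - t)) \<le> norm ((t+h) - t) * (B * \<bar>h\<bar>)"
    proof (rule differentiable_bound_linearization[where S = ?S and f' = "\<lambda>x u. u *\<^sub>R D 1 x"])
      show "t + s *\<^sub>R (t + h - t) \<in> ?S" if "s \<in> {0..1}" for s
        using that by (auto simp: closed_segment_def intro!: exI[of _ s] simp: algebra_simps)
      show "(D 0 has_derivative (\<lambda>u. u *\<^sub>R D 1 x)) (at x within ?S)" for x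
        using der by (metis has_derivative_at_withinI has_vector_derivative_def One_nat_def)
      show "onorm ((\<lambda>u. u *\<^sub>R D 1 x) - (\<lambda>u. u *\<^sub>R D 1 t)) \<le> B * \<bar>h\<bar>" if x: "x \<in> ?S" for x
      proof (rule onorm_bound)
        show "0 \<le> B * \<bar>h\<bar>" using B0 by simp
        fix u :: real
        have xt: "\<bar>x - t\<bar> \<le> \<bar>h\<bar>"
          using dist_in_closed_segment[OF x] by (simp add: dist_real_def)
        have n1: "norm (D 1 x - D 1 t) \<le> B * \<bar>h\<bar>"
        proof -
          have "norm (D 1 x - D 1 t) \<le> B * \<bar>x - t\<bar>" using lip[of x] segsub x by blast
          also have "\<dots> \<le> B * \<bar>h\<bar>" by (rule mult_left_mono[OF xt B0])
          finally show ?thesis .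
        qed
        have "((\<lambda>u. u *\<^sub>R D 1 x) - (\<lambda>u. u *\<^sub>R D 1 t)) u = u *\<^sub>R (D 1 x - D 1 t)"
          by (simp add: scaleR_diff_right)
        hence "norm (((\<lambda>u. u *\<^sub>R D 1 x) - (\<lambda>u. u *\<^sub>R D 1 t)) u) = \<bar>u\<bar> * norm (D 1 x - D 1 t)"
          by simp
        also have "\<dots> \<le> \<bar>u\<bar> * (B * \<bar>h\<bar>)"
          by (rule mult_left_mono[OF n1]) simp
        finally show "norm (((\<lambda>u. u *\<^sub>R D 1 x) - (\<lambda>u. u *\<^sub>R D 1 t)) u) \<le> B * \<bar>h\<bar> * norm u"
          by (simp add: mult.commute)
      qed
    qed simp
    moreover have "\<bar>h\<bar> * (B * \<bar>h\<bar>) = B * h^2"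
      by (metis abs_mult_self_eq mult.commute mult.left_commute power2_eq_square)
    ultimately show ?thesis by simp
  qed
  thus ?thesis by blast
qed

lemma mat_bound: "\<exists>K\<ge>0. \<forall>x. norm ((A::real^'n^'n) *v x) \<le> K * norm x"
  using bounded_linear.nonneg_bounded[OF matrix_vector_mul_bounded_linear[of A]]
  by (metis mult.commute)

lemma consistency:
  fixes MD SD MF SF :: "real^'n^'n" and \<xi> :: "real \<Rightarrow> real^'n"
  assumes "smooth_fun \<xi>"
  shows "(\<lambda>\<delta>. norm (hybrid_op MD SD MF SF \<xi> \<delta> t - cont_op (MD + MF) (SD + SF) \<xi> t))
             \<in> O[at_right 0](\<lambda>\<delta>. \<delta>)"
proof -
  obtain D where D0: "D 0 = \<xi>" and der: "\<forall>k t. (D k has_vector_derivative D (Suc k) t) (at t)"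
    using assms unfolding smooth_fun_def by blast
  have vd: "vector_derivative \<xi> (at t) = D 1 t"
    using der D0 by (metis One_nat_def vector_derivative_at)
  obtain K where K: "\<And>h. \<bar>h\<bar> \<le> 1 \<Longrightarrow> norm (\<xi> (t+h) - \<xi> t - h *\<^sub>R D 1 t) \<le> K * h^2"
    using taylor_bound[OF der, of t] D0 by blast
  obtain c1 where c1: "c1 \<ge> 0" "\<And>x. norm (MD *v x) \<le> c1 * norm x" using mat_bound by blast
  obtain c2 where c2: "c2 \<ge> 0" "\<And>x. norm (SD *v x) \<le> c2 * norm x" using mat_bound by blast
  obtain c3 where c3: "c3 \<ge> 0" "\<And>x. norm (MF *v x) \<le> c3 * norm x" using mat_bound by blast
  let ?v = "D 1 t"
  have main: "norm (hybrid_op MD SD MF SF \<xi> \<delta> t - cont_op (MD + MF) (SD + SF) \<xi> t)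
      \<le> (c1 * K + c2 * (K + norm ?v) + c3 * K) * norm \<delta>" if d: "0 < \<delta>" "\<delta> \<le> 1" for \<delta>
  proof -
    define R1 where "R1 = \<xi> (t+\<delta>) - \<xi> t - \<delta> *\<^sub>R ?v"
    define R2 where "R2 = \<xi> (t+(-\<delta>)) - \<xi> t - (-\<delta>) *\<^sub>R ?v"
    have R1: "norm R1 \<le> K * \<delta>^2" unfolding R1_def using K[of \<delta>] d by simp
    have R2: "norm R2 \<le> K * \<delta>^2" unfolding R2_def using K[of "-\<delta>"] d by simp
    define a where "a = (1/\<delta>) *\<^sub>R R1"
    define b where "b = R1 + \<delta> *\<^sub>R ?v"
    define c where "c = (1/\<delta>) *\<^sub>R R2"
    have eqa: "(1/\<delta>) *\<^sub>R (\<xi> (t + \<delta>) - \<xi> t) - ?v = a"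
      using d unfolding a_def R1_def by (simp add: algebra_simps)
    have eqb: "\<xi> (t + \<delta>) - \<xi> t = b" unfolding b_def R1_def by simp
    have eqc: "(1/\<delta>) *\<^sub>R (\<xi> t - \<xi> (t - \<delta>)) - ?v = - c"
      using d unfolding c_def R2_def by (simp add: algebra_simps)
    have "hybrid_op MD SD MF SF \<xi> \<delta> t - cont_op (MD + MF) (SD + SF) \<xi> t
        = MD *v ((1/\<delta>) *\<^sub>R (\<xi> (t + \<delta>) - \<xi> t) - ?v) + SD *v (\<xi> (t + \<delta>) - \<xi> t)
          + MF *v ((1/\<delta>) *\<^sub>R (\<xi> t - \<xi> (t - \<delta>)) - ?v)"
      unfolding hybrid_op_def cont_op_def vd
      by (simp add: matrix_vector_mult_diff_distrib matrix_vector_right_distrib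
          matrix_vector_mult_add_rdistrib algebra_simps)
    also have "\<dots> = MD *v a + SD *v b - MF *v c"
    proof -
      have "MF *v (- c) = - (MF *v c)"
        by (metis diff_0 matrix_vector_mult_0_right matrix_vector_mult_diff_distrib)
      thus ?thesis unfolding eqa eqc unfolding eqb by simp
    qed
    finally have eq: "hybrid_op MD SD MF SF \<xi> \<delta> t - cont_op (MD + MF) (SD + SF) \<xi> t
        = MD *v a + SD *v b - MF *v c" .
    have na: "norm a \<le> K * \<delta>"
    proof -
      have "norm a = norm R1 / \<delta>" using d unfolding a_def by simp
      also have "\<dots> \<le> K * \<delta>^2 / \<delta>" using R1 d by (simp add: divide_right_mono)
      also have "\<dots> = K * \<delta>" using d by (simp add: power2_eq_square)
      finally show ?thesis .
    qed
    have nc: "norm c \<le> K * \<delta>"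
    proof -
      have "norm c = norm R2 / \<delta>" using d unfolding c_def by simp
      also have "\<dots> \<le> K * \<delta>^2 / \<delta>" using R2 d by (simp add: divide_right_mono)
      also have "\<dots> = K * \<delta>" using d by (simp add: power2_eq_square)
      finally show ?thesis .
    qed
    have nb: "norm b \<le> (K + norm ?v) * \<delta>"
    proof -
      have "norm b \<le> norm R1 + \<delta> * norm ?v" unfolding b_def using d
        by (metis abs_of_pos norm_scaleR norm_triangle_ineq)
      also have "\<dots> \<le> K * \<delta>^2 + \<delta> * norm ?v" using R1 by simp
      also have "K * \<delta>^2 \<le> K * \<delta>"
      proof -
        have K0: "K \<ge> 0" using K[of 1] by (simp add: order_trans[OF norm_ge_zero])
        have "\<delta>^2 \<le> \<delta>" using d by (simp add: power2_eq_square mult_le_cancel_right1)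
        thus ?thesis using K0 by (rule mult_left_mono)
      qed
      hence "K * \<delta>^2 + \<delta> * norm ?v \<le> (K + norm ?v) * \<delta>" by (simp add: algebra_simps)
      finally show ?thesis .
    qed
    have "norm (MD *v a + SD *v b - MF *v c) \<le> norm (MD *v a + SD *v b) + norm (MF *v c)"
      by (rule norm_triangle_ineq4)
    also have "\<dots> \<le> norm (MD *v a) + norm (SD *v b) + norm (MF *v c)"
      using norm_triangle_ineq[of "MD *v a" "SD *v b"] by linarith
    also have "\<dots> \<le> c1 * (K * \<delta>) + c2 * ((K + norm ?v) * \<delta>) + c3 * (K * \<delta>)"
    proof -
      have "norm (MD *v a) \<le> c1 * (K * \<delta>)" using c1(2)[of a] mult_left_mono[OF na c1(1)] by linarith
      moreover have "norm (SD *v b) \<le> c2 * ((K + norm ?v) * \<delta>)" using c2(2)[of b] mult_left_mono[OF nb c2(1)] by linarith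
      moreover have "norm (MF *v c) \<le> c3 * (K * \<delta>)" using c3(2)[of c] mult_left_mono[OF nc c3(1)] by linarith
      ultimately show ?thesis by linarith
    qed
    also have "\<dots> = (c1 * K + c2 * (K + norm ?v) + c3 * K) * norm \<delta>" using d by (simp add: algebra_simps)
    finally show ?thesis using eq by simp
  qed
  show ?thesis
  proof (rule bigoI[where c = "c1 * K + c2 * (K + norm ?v) + c3 * K"])
    have "eventually (\<lambda>\<delta>::real. 0 < \<delta> \<and> \<delta> \<le> 1) (at_right 0)"
      using eventually_at_right_real[of 0 "1::real"] by (rule eventually_mono) auto
    thus "eventually (\<lambda>\<delta>. norm (norm (hybrid_op MD SD MF SF \<xi> \<delta> t - cont_op (MD + MF) (SD + SF) \<xi> t))
        \<le> (c1 * K + c2 * (K + norm ?v) + c3 * K) * norm \<delta>) (at_right 0)"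
      by eventually_elim (use main in auto)
  qed
qed


definition toV :: "('n::finite \<Rightarrow> nat) \<Rightarrow> complex^'n \<Rightarrow> complex Matrix.vec" where
  "toV f v = Matrix.vec CARD('n) (\<lambda>i. v $ inv_into UNIV f i)"

definition toM :: "('n::finite \<Rightarrow> nat) \<Rightarrow> complex^'n^'n \<Rightarrow> complex Matrix.mat" where
  "toM f C = Matrix.mat CARD('n) CARD('n) (\<lambda>(i,j). C $ inv_into UNIV f i $ inv_into UNIV f j)"

lemma bij_facts:
  assumes bij: "bij_betw f (UNIV::'n::finite set) {..<CARD('n)}"
  shows "\<And>k. f k < CARD('n)" "\<And>i. i < CARD('n) \<Longrightarrow> f (inv_into UNIV f i) = i"
    "\<And>k. inv_into UNIV f (f k) = k"
    "\<And>h. (\<Sum>j\<in>{0..<CARD('n)}. h (inv_into UNIV f j)) = (\<Sum>k\<in>UNIV. h k)"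
proof -
  show "\<And>k. f k < CARD('n)" using bij by (auto simp: bij_betw_def)
  show "\<And>i. i < CARD('n) \<Longrightarrow> f (inv_into UNIV f i) = i"
    using bij by (metis bij_betw_inv_into_right lessThan_iff)
  show "\<And>k. inv_into UNIV f (f k) = k" using bij by (simp add: bij_betw_def)
  have b: "bij_betw (inv_into UNIV f) {0..<CARD('n)} UNIV"
    using bij_betw_inv_into[OF bij] by (simp add: lessThan_atLeast0)
  show "\<And>h. (\<Sum>j\<in>{0..<CARD('n)}. h (inv_into UNIV f j)) = (\<Sum>k\<in>UNIV. h k)"
    by (rule sum.reindex_bij_betw[OF b])
qed

lemma toV_carrier[simp]: "toV (f::'n::finite \<Rightarrow> nat) v \<in> carrier_vec CARD('n)"
  unfolding toV_def by simp

lemma toM_carrier[simp]: "toM (f::'n::finite \<Rightarrow> nat) C \<in> carrier_mat CARD('n) CARD('n)"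
  unfolding toM_def by simp

lemma toM_mult:
  assumes bij: "bij_betw f (UNIV::'n::finite set) {..<CARD('n)}"
  shows "toM f C *\<^sub>v toV f v = toV f (C *v v)"
proof (rule eq_vecI)
  note bf = bij_facts[OF bij]
  show "dim_vec (toM f C *\<^sub>v toV f v) = dim_vec (toV f (C *v v))" by (simp add: toM_def toV_def)
  fix i assume "i < dim_vec (toV f (C *v v))"
  hence i: "i < CARD('n)" by (simp add: toV_def)
  have "(toM f C *\<^sub>v toV f v) $ i = (\<Sum>j\<in>{0..<CARD('n)}. C $ inv_into UNIV f i $ inv_into UNIV f j * v $ inv_into UNIV f j)"
    using i by (simp add: toM_def toV_def scalar_prod_def Matrix.row_def)
  also have "\<dots> = (\<Sum>k\<in>UNIV. C $ inv_into UNIV f i $ k * v $ k)"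
    by (rule bf(4))
  also have "\<dots> = toV f (C *v v) $ i"
    using i by (simp add: toV_def matrix_vector_mult_def)
  finally show "(toM f C *\<^sub>v toV f v) $ i = toV f (C *v v) $ i" .
qed

lemma toV_smult: "toV f (c *s v) = c \<cdot>\<^sub>v toV f v"
  by (rule eq_vecI) (auto simp: toV_def)

lemma toV_zero_iff:
  assumes bij: "bij_betw f (UNIV::'n::finite set) {..<CARD('n)}"
  shows "toV f (v::complex^'n) = 0\<^sub>v CARD('n) \<longleftrightarrow> v = 0"
proof
  note bf = bij_facts[OF bij]
  assume h: "toV f v = 0\<^sub>v CARD('n)"
  show "v = 0"
  proof (rule Finite_Cartesian_Product.vec_eq_iff[THEN iffD2], rule allI)
    fix k
    have "toV f v $ f k = v $ k" using bf by (simp add: toV_def)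
    thus "v $ k = 0 $ k" using h bf(1)[of k] by simp
  qed
next
  assume "v = 0" thus "toV f v = 0\<^sub>v CARD('n)" by (auto simp: toV_def)
qed

lemma toV_inv:
  assumes bij: "bij_betw f (UNIV::'n::finite set) {..<CARD('n)}"
    and w: "w \<in> carrier_vec CARD('n)"
  shows "toV f ((\<chi> k. w $ f k) :: complex^'n) = w"
  using bij_facts[OF bij] w by (intro eq_vecI) (auto simp: toV_def)

lemma toV_inj:
  assumes bij: "bij_betw f (UNIV::'n::finite set) {..<CARD('n)}"
    and "toV f (x::complex^'n) = toV f y"
  shows "x = y"
proof (rule Finite_Cartesian_Product.vec_eq_iff[THEN iffD2], rule allI)
  note bf = bij_facts[OF bij]
  fix k
  have "toV f x $ f k = x $ k" "toV f y $ f k = y $ k" using bf by (simp_all add: toV_def)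
  thus "x $ k = y $ k" using assms(2) by simp
qed

lemma eigenvalues_toM:
  assumes bij: "bij_betw f (UNIV::'n::finite set) {..<CARD('n)}"
  shows "Defs.eigenvalues (A::real^'n^'n) = {c. eigenvalue (toM f (cmat A)) c}"
proof -
  have dr: "dim_row (toM f (cmat A)) = CARD('n)" by (simp add: toM_def)
  have 1: "eigenvalue (toM f (cmat A)) c" if "c \<in> Defs.eigenvalues A" for c
  proof -
    have "\<exists>v. v \<noteq> 0 \<and> cmat A *v v = c *s v" using that by (simp add: Defs.eigenvalues_def)
    then obtain v where v: "v \<noteq> 0" "cmat A *v v = c *s v" by blast
    have "toM f (cmat A) *\<^sub>v toV f v = toV f (cmat A *v v)" by (rule toM_mult[OF bij])
    also have "\<dots> = toV f (c *s v)" by (simp only: v(2))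
    also have "\<dots> = c \<cdot>\<^sub>v toV f v" by (rule toV_smult)
    finally have e1: "toM f (cmat A) *\<^sub>v toV f v = c \<cdot>\<^sub>v toV f v" .
    have e2: "toV f v \<noteq> 0\<^sub>v CARD('n)" using toV_zero_iff[OF bij] v(1) by blast
    show ?thesis unfolding eigenvalue_def eigenvector_def dr
      using e1 e2 toV_carrier by blast
  qed
  have 2: "c \<in> Defs.eigenvalues A" if ev: "eigenvalue (toM f (cmat A)) c" for c
  proof -
    obtain w where w: "w \<in> carrier_vec CARD('n)" "w \<noteq> 0\<^sub>v CARD('n)"
        "toM f (cmat A) *\<^sub>v w = c \<cdot>\<^sub>v w"
      using ev unfolding eigenvalue_def eigenvector_def dr by blast
    define v where "v = ((\<chi> k. w $ f k) :: complex^'n)"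
    have tv: "toV f v = w" unfolding v_def by (rule toV_inv[OF bij w(1)])
    have "v \<noteq> 0" using w(2) tv toV_zero_iff[OF bij, of v] by blast
    moreover have "cmat A *v v = c *s v"
    proof -
      have "toV f (cmat A *v v) = toM f (cmat A) *\<^sub>v toV f v" by (rule toM_mult[OF bij, symmetric])
      also have "\<dots> = c \<cdot>\<^sub>v w" using w(3) tv by simp
      also have "\<dots> = toV f (c *s v)" unfolding toV_smult tv ..
      finally show ?thesis by (rule toV_inj[OF bij])
    qed
    ultimately show ?thesis unfolding Defs.eigenvalues_def by blast
  qed
  show ?thesis using 1 2 by blast
qed

lemma pow_iter:
  assumes M: "M \<in> carrier_mat n n" and w: "\<And>l. w l \<in> carrier_vec n"
    and rec: "\<And>l. w (Suc l) = M *\<^sub>v w l"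
  shows "w k = (M ^\<^sub>m k) *\<^sub>v w 0"
  using w rec
proof (induction k arbitrary: w)
  case 0
  then show ?case using M by simp
next
  case (Suc k)
  have h1: "\<And>l. (\<lambda>l. w (Suc l)) l \<in> carrier_vec n" using Suc.prems(1) by simp
  have h2: "\<And>l. (\<lambda>l. w (Suc l)) (Suc l) = M *\<^sub>v (\<lambda>l. w (Suc l)) l"
    using Suc.prems(2) by simp
  have "w (Suc k) = (M ^\<^sub>m k) *\<^sub>v w (Suc 0)"
    using Suc.IH[where w="\<lambda>l. w (Suc l)", OF h1 h2] by simp
  also have "\<dots> = (M ^\<^sub>m k) *\<^sub>v (M *\<^sub>v w 0)" using Suc.prems by simp
  also have "\<dots> = (M ^\<^sub>m k * M) *\<^sub>v w 0"
  proof -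
    have Mk: "M ^\<^sub>m k \<in> carrier_mat n n" using M by (intro carrier_matI) auto
    show ?thesis by (rule assoc_mult_mat_vec[symmetric, OF Mk M Suc.prems(1)])
  qed
  finally show ?case by simp
qed

lemma sr_scaled:
  assumes bij: "bij_betw f (UNIV::'n::finite set) {..<CARD('n)}"
    and sr: "Defs.spectral_radius (A::real^'n^'n) < r" and r: "r > 0"
  shows "Spectral_Radius.spectral_radius (toM f (cmat ((-1/r) *\<^sub>R A))) < 1"
proof -
  define A' where "A' = (-1/r) *\<^sub>R A"
  define M where "M = toM f (cmat A')"
  have Mc: "M \<in> carrier_mat CARD('n) CARD('n)" unfolding M_def by simp
  have N: "0 < CARD('n)" by simp
  from spectral_radius_mem_max(1)[OF Mc N]
  obtain \<mu> where mu: "\<mu> \<in> Spectral_Radius.spectrum M" and srm: "Spectral_Radius.spectral_radius M = norm \<mu>"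
    by blast
  have "\<mu> \<in> Defs.eigenvalues A'"
    using mu unfolding eigenvalues_toM[OF bij] Spectral_Radius.spectrum_def M_def by simp
  then obtain v where v: "v \<noteq> 0" "cmat A' *v v = \<mu> *s v" unfolding Defs.eigenvalues_def by blast
  have ent: "cmat A $ i $ j = complex_of_real (-r) * cmat A' $ i $ j" for i j
    using r by (simp add: cmat_def A'_def)
  have "cmat A *v v = complex_of_real (-r) *s (cmat A' *v v)"
    by (simp add: Finite_Cartesian_Product.vec_eq_iff matrix_vector_mult_def ent sum_distrib_left mult.assoc sum_negf)
  also have "\<dots> = (complex_of_real (-r) * \<mu>) *s v" by (simp add: v(2) vector_smult_assoc)
  finally have mem: "complex_of_real (-r) * \<mu> \<in> Defs.eigenvalues A"
    using v(1) unfolding Defs.eigenvalues_def by blast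
  have bdd: "bdd_above (cmod ` Defs.eigenvalues A)"
  proof -
    have "finite (Defs.eigenvalues A)"
      using card_finite_spectrum(1)[OF toM_carrier[of f "cmat A"]]
      unfolding eigenvalues_toM[OF bij] Spectral_Radius.spectrum_def by simp
    thus ?thesis by simp
  qed
  have "cmod (complex_of_real (-r) * \<mu>) \<le> Defs.spectral_radius A"
    unfolding Defs.spectral_radius_def by (rule cSup_upper[OF imageI[OF mem] bdd])
  hence "r * cmod \<mu> \<le> Defs.spectral_radius A" using r by (simp add: norm_mult)
  hence "r * cmod \<mu> < r * 1" using sr by linarith
  hence "cmod \<mu> < 1" using r by (rule mult_less_cancel_left_pos[THEN iffD1, rotated])
  thus ?thesis using srm unfolding M_def A'_def by simp
qed

definition cvec :: "real^'n \<Rightarrow> complex^'n" where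
  "cvec v = (\<chi> i. complex_of_real (v $ i))"

lemma cmat_cvec: "cmat B *v cvec v = cvec (B *v v)"
  by (simp add: Finite_Cartesian_Product.vec_eq_iff cmat_def cvec_def matrix_vector_mult_def)

lemma mat_vec_bound:
  assumes Mc: "P \<in> carrier_mat n n" and nb: "norm_bound P c" and w: "w \<in> carrier_vec n" and i: "i < n"
  shows "cmod ((P *\<^sub>v w) $ i) \<le> c * (\<Sum>j\<in>{0..<n}. cmod (w $ j))"
proof -
  have "(P *\<^sub>v w) $ i = (\<Sum>j\<in>{0..<n}. P $$ (i,j) * w $ j)"
    using Mc w i by (simp add: scalar_prod_def Matrix.row_def)
  hence "cmod ((P *\<^sub>v w) $ i) \<le> (\<Sum>j\<in>{0..<n}. cmod (P $$ (i,j) * w $ j))"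
    by (simp add: norm_sum)
  also have "\<dots> \<le> (\<Sum>j\<in>{0..<n}. c * cmod (w $ j))"
  proof (rule sum_mono)
    fix j assume "j \<in> {0..<n}"
    hence "cmod (P $$ (i,j)) \<le> c" using nb Mc i unfolding norm_bound_def by auto
    thus "cmod (P $$ (i,j) * w $ j) \<le> c * cmod (w $ j)"
      by (simp add: norm_mult mult_right_mono)
  qed
  also have "\<dots> = c * (\<Sum>j\<in>{0..<n}. cmod (w $ j))" by (simp add: sum_distrib_left)
  finally show ?thesis .
qed

lemma zero_stab:
  fixes MD MF :: "real^'n^'n"
  assumes pd: "pos_def_mat MD" and sr: "Defs.spectral_radius (matrix_inv MD ** MF) < 1"
  shows "zero_stable MD MF"
proof -
  obtain f0 where f0: "bij_betw f0 (UNIV::'n set) {0..<card (UNIV::'n set)}"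
    using ex_bij_betw_finite_nat[of "UNIV::'n set"] by auto
  have bij: "bij_betw f0 (UNIV::'n set) {..<CARD('n)}" using f0 by (simp add: atLeast0LessThan)
  note bf = bij_facts[OF bij]
  define N where "N = CARD('n)"
  define A where "A = matrix_inv MD ** MF"
  define \<rho> where "\<rho> = Defs.spectral_radius A"
  define r where "r = max (1/2) ((1 + \<rho>) / 2)"
  have r0: "0 < r" and r1: "r < 1" and rr: "\<rho> < r"
    using sr unfolding r_def \<rho>_def A_def by (auto simp: less_max_iff_disj max_less_iff_conj)
  define A' where "A' = (-1/r) *\<^sub>R A"
  define M where "M = toM f0 (cmat A')"
  have Mc: "M \<in> carrier_mat N N" unfolding M_def N_def by simp
  have "Spectral_Radius.spectral_radius M < 1"
    unfolding M_def A'_def by (rule sr_scaled[OF bij rr[unfolded \<rho>_def] r0])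
  from spectral_radius_jnf_norm_bound_less_1_upper_triangular[OF Mc this]
  obtain c where c: "\<And>k. norm_bound (M ^\<^sub>m k) c" by blast
  define c' where "c' = max c 0"
  have c': "\<And>k. norm_bound (M ^\<^sub>m k) c'" using c unfolding norm_bound_def c'_def
    by (meson max.coboundedI1)
  have c'0: "c' \<ge> 0" unfolding c'_def by simp
  have inj: "inj ((*v) MD)"
  proof (rule injI)
    fix x y assume "MD *v x = MD *v y"
    hence "MD *v (x - y) = 0" by (simp add: matrix_vector_mult_diff_distrib)
    hence z: "inner (x - y) (MD *v (x - y)) = 0" by simp
    show "x = y"
    proof (rule ccontr)
      assume "x \<noteq> y"
      hence "x - y \<noteq> 0" by simp
      hence "inner (x - y) (MD *v (x - y)) > 0" using pd unfolding pos_def_mat_def by blast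
      thus False using z by simp
    qed
  qed
  hence "\<exists>B. B ** MD = Finite_Cartesian_Product.mat 1" using matrix_left_invertible_injective by blast
  hence "invertible MD" using invertible_left_inverse by blast
  hence "\<exists>A'. MD ** A' = Finite_Cartesian_Product.mat 1 \<and> A' ** MD = Finite_Cartesian_Product.mat 1"
    unfolding invertible_def .
  from someI_ex[OF this] have inv: "matrix_inv MD ** MD = Finite_Cartesian_Product.mat 1"
    unfolding matrix_inv_def by blast
  define K where "K = real N * c' * real N"
  have K0: "K \<ge> 0" unfolding K_def using c'0 by simp
  show ?thesis unfolding zero_stable_def
  proof (intro exI[of _ "1 + K / (1 - r)"] allI impI)
    fix y :: "nat \<Rightarrow> real^'n" and l :: nat
    assume rec: "\<forall>l. MD *v (y (l+2) - y (l+1)) + MF *v (y (l+1) - y l) = 0"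
    define d where "d l = y (Suc l) - y l" for l
    have drec: "d (Suc l) = - (A *v d l)" for l
    proof -
      have "MD *v d (Suc l) = - (MF *v d l)"
        using rec[rule_format, of l] unfolding d_def
        by (simp add: eq_neg_iff_add_eq_0 numeral_2_eq_2)
      have neg: "\<And>B (x::real^'n). B *v (- x) = - (B *v x)"
        by (metis diff_0 matrix_vector_mult_0_right matrix_vector_mult_diff_distrib)
      have "d (Suc l) = (matrix_inv MD ** MD) *v d (Suc l)" by (simp add: inv)
      also have "\<dots> = matrix_inv MD *v (MD *v d (Suc l))" by (simp add: matrix_vector_mul_assoc)
      also have "\<dots> = matrix_inv MD *v (- (MF *v d l))" using \<open>MD *v d (Suc l) = - (MF *v d l)\<close> by simp
      also have "\<dots> = - (A *v d l)" unfolding A_def neg by (simp add: matrix_vector_mul_assoc)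
      finally show ?thesis .
    qed
    define e where "e l = (1 / r^l) *\<^sub>R d l" for l
    have erec: "e (Suc l) = A' *v e l" for l
    proof -
      have "A' *v e l = ((1/r^l) * (-1/r)) *\<^sub>R (A *v d l)" unfolding A'_def e_def
        by (simp only: matrix_vector_mult_scaleR scaleR_matrix_vector_assoc[symmetric] scaleR_scaleR)
      also have "(1/r^l) * (-1/r) = - (1 / r^Suc l)" using r0 by (simp add: field_simps)
      also have "(- (1 / r^Suc l)) *\<^sub>R (A *v d l) = e (Suc l)"
        by (simp only: e_def drec scaleR_minus_right scaleR_minus_left)
      finally show ?thesis by simp
    qed
    define w where "w l = toV f0 (cvec (e l))" for l
    have wrec: "w (Suc l) = M *\<^sub>v w l" for l
      unfolding w_def M_def erec by (simp add: toM_mult[OF bij] cmat_cvec)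
    have wc: "w l \<in> carrier_vec N" for l unfolding w_def N_def by simp
    have wk: "w k = (M ^\<^sub>m k) *\<^sub>v w 0" for k by (rule pow_iter[where w=w, OF Mc wc wrec])
    have sum0: "(\<Sum>j\<in>{0..<N}. cmod (w 0 $ j)) \<le> real N * norm (e 0)"
    proof -
      have "(\<Sum>j\<in>{0..<N}. cmod (w 0 $ j)) = (\<Sum>j\<in>{0..<N}. \<bar>e 0 $ inv_into UNIV f0 j\<bar>)"
        by (rule sum.cong) (auto simp: w_def toV_def cvec_def N_def)
      also have "\<dots> = (\<Sum>x\<in>UNIV. \<bar>e 0 $ x\<bar>)" unfolding N_def by (rule bf(4))
      also have "\<dots> \<le> of_nat (card (UNIV::'n set)) * norm (e 0)"
        by (rule sum_bounded_above) (rule component_le_norm_cart)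
      finally show ?thesis unfolding N_def by simp
    qed
    have ek: "norm (e k) \<le> K * norm (e 0)" for k
    proof -
      have comp: "\<bar>e k $ x\<bar> \<le> c' * (real N * norm (e 0))" for x
      proof -
        have "\<bar>e k $ x\<bar> = cmod (w k $ f0 x)"
          using bf by (simp add: w_def toV_def cvec_def N_def)
        also have "\<dots> \<le> c' * (\<Sum>j\<in>{0..<N}. cmod (w 0 $ j))"
        proof -
          have Mk: "M ^\<^sub>m k \<in> carrier_mat N N" using Mc by (intro carrier_matI) auto
          have fx: "f0 x < N" unfolding N_def by (rule bf(1))
          have "w k = (M ^\<^sub>m k) *\<^sub>v w 0" by (rule wk)
          thus ?thesis using mat_vec_bound[OF Mk c' wc fx] by simp
        qed
        also have "\<dots> \<le> c' * (real N * norm (e 0))" by (rule mult_left_mono[OF sum0 c'0])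
        finally show ?thesis .
      qed
      have "norm (e k) \<le> (\<Sum>x\<in>UNIV. \<bar>e k $ x\<bar>)" by (rule norm_le_l1_cart)
      also have "\<dots> \<le> of_nat (card (UNIV::'n set)) * (c' * (real N * norm (e 0)))"
        by (rule sum_bounded_above) (rule comp)
      finally show ?thesis unfolding K_def N_def by (simp add: mult.assoc)
    qed
    have dk: "norm (d k) \<le> K * r^k * norm (d 0)" for k
    proof -
      have "d k = r^k *\<^sub>R e k" unfolding e_def using r0 by simp
      hence "norm (d k) = r^k * norm (e k)" using r0 by simp
      also have "\<dots> \<le> r^k * (K * norm (e 0))" using ek r0 by (simp add: mult_left_mono)
      also have "e 0 = d 0" unfolding e_def by simp
      finally show ?thesis by (simp add: algebra_simps)
    qed
    have ysum: "y l = y 0 + (\<Sum>k<l. d k)" for l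
      by (induction l) (simp_all add: d_def algebra_simps)
    have gs: "(\<Sum>k<l. r^k) \<le> 1 / (1 - r)"
    proof -
      have "(\<Sum>k<l. r^k) = (1 - r^l) / (1 - r)" using r1 by (simp add: sum_gp_strict)
      also have "\<dots> \<le> 1 / (1 - r)" using r0 r1 by (simp add: divide_right_mono)
      finally show ?thesis .
    qed
    have "norm (y l) = norm (y 0 + (\<Sum>k<l. d k))" by (subst ysum[of l]) (rule refl)
    also have "\<dots> \<le> norm (y 0) + norm (\<Sum>k<l. d k)" by (rule norm_triangle_ineq)
    also have "\<dots> \<le> norm (y 0) + (\<Sum>k<l. norm (d k))" by (rule add_left_mono[OF norm_sum])
    also have "\<dots> \<le> norm (y 0) + (\<Sum>k<l. K * norm (d 0) * r^k)"
      using dk by (intro add_left_mono sum_mono) (simp add: algebra_simps)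
    also have "\<dots> = norm (y 0) + K * norm (d 0) * (\<Sum>k<l. r^k)"
      by (simp add: sum_distrib_left)
    also have "\<dots> \<le> norm (y 0) + K * norm (d 0) * (1 / (1 - r))"
      using gs K0 by (intro add_left_mono mult_left_mono) auto
    also have "\<dots> \<le> norm (y 0) + K / (1 - r) * (norm (y 0) + norm (y 1))"
    proof -
      have "norm (d 0) \<le> norm (y 0) + norm (y 1)" unfolding d_def
        using norm_triangle_ineq4[of "y 1" "y 0"] by simp
      moreover have "K / (1 - r) \<ge> 0" using K0 r1 by simp
      ultimately have "K / (1 - r) * norm (d 0) \<le> K / (1 - r) * (norm (y 0) + norm (y 1))"
        by (rule mult_left_mono)
      thus ?thesis by simp
    qed
    also have "\<dots> \<le> (1 + K / (1 - r)) * (norm (y 0) + norm (y 1))"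
      by (simp add: algebra_simps)
    finally show "norm (y l) \<le> (1 + K / (1 - r)) * (norm (y 0) + norm (y 1))" .
  qed
qed


hide_const (open) Spectral_Radius.spectral_radius

theorem theorem1:
  fixes MD SD MF SF :: "real^'n^'n" and blk :: "'n \<Rightarrow> nat"
  assumes "block_diag blk MD" and "block_diag blk SD"
    and "pos_def_mat MD" and "pos_def_mat SD"
  shows "(\<forall>(\<xi>::real \<Rightarrow> real^'n) t. smooth_fun \<xi> \<longrightarrow>
           (\<lambda>\<delta>. norm (hybrid_op MD SD MF SF \<xi> \<delta> t - cont_op (MD + MF) (SD + SF) \<xi> t))
             \<in> O[at_right 0](\<lambda>\<delta>. \<delta>))
       \<and> (spectral_radius (matrix_inv MD ** MF) < 1 \<longrightarrow> zero_stable MD MF)"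
  using consistency zero_stab[OF assms(3)] by blast

end
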